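(* Let $\mathbb{F}_q$ be a finite field with $q$ elements and let $I\subset\mathbb{F}_q[x_1,\ldots,x_n]$ be a zero-dimensional ideal with irredundant primary decomposition $I=I_1\cap\cdots\cap I_t$. For $i=1,\ldots,t$ let $J_i=I_1\cap\cdots\cap I_{i-1}\cap I_{i+1}\cap\cdots\cap I_t$. Let $\Psi_I:\mathbb{F}_q[\mathbf{x}]/I\to\mathbb{F}_q[\mathbf{x}]/I$ be the $\mathbb{F}_q$-linear map $\Psi_I(\bar f)=\bar f^{\,q}-\bar f$. Then there exist $h_1,\ldots,h_t$ with $h_i\in J_i\setminus I_i$ and $\bar h_i^{\,2}=\bar h_i$ for each $i$, such that $\mathrm{Ker}(\Psi_I)$ is a direct product of one-dimensional $\mathbb{F}_q$-algebras $$\mathrm{Ker}(\Psi_I)=\langle\bar h_1\rangle\oplus\cdots\oplus\langle\bar h_t\rangle.$$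
   Context: An ideal $I$ is zero-dimensional if $\mathbb{F}_q[\mathbf{x}]/I$ is a finite-dimensional $\mathbb{F}_q$-vector space. $\bar h$ denotes the class of $h$ in $\mathbb{F}_q[\mathbf{x}]/I$; $\langle\bar h_i\rangle$ denotes the one-dimensional $\mathbb{F}_q$-subspace $\mathbb{F}_q\bar h_i$, and the decomposition is an internal direct sum of these subalgebras inside $\mathbb{F}_q[\mathbf{x}]/I$. For $t=1$, $J_1=\mathbb{F}_q[\mathbf{x}]$. *)

theory Defs
  imports Main "HOL-Library.Poly_Mapping"
begin

text \<open>Multivariate polynomials over 'a in the variables indexed by the finite type 'n
  (so n = CARD('n)): finitely supported maps from monomials (exponent vectors) to coefficients.\<close>
type_synonym ('n, 'a) mpoly = "('n \<Rightarrow>\<^sub>0 nat) \<Rightarrow>\<^sub>0 'a"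

definition pconst :: "'a::zero \<Rightarrow> ('n, 'a) mpoly" where
  "pconst c = Poly_Mapping.single 0 c"

definition is_ideal :: "'r::comm_ring_1 set \<Rightarrow> bool" where
  "is_ideal I \<longleftrightarrow> 0 \<in> I \<and> (\<forall>a\<in>I. \<forall>b\<in>I. a + b \<in> I) \<and> (\<forall>r. \<forall>a\<in>I. r * a \<in> I)"

definition radical :: "'r::comm_ring_1 set \<Rightarrow> 'r set" where
  "radical I = {f. \<exists>m. f ^ m \<in> I}"

definition primary_ideal :: "'r::comm_ring_1 set \<Rightarrow> bool" where
  "primary_ideal Q \<longleftrightarrow> is_ideal Q \<and> Q \<noteq> UNIV \<and>
     (\<forall>a b. a * b \<in> Q \<longrightarrow> a \<in> Q \<or> (\<exists>m. b ^ m \<in> Q))"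

definition Jcomp :: "(nat \<Rightarrow> 'r set) \<Rightarrow> nat \<Rightarrow> nat \<Rightarrow> 'r set" where
  "Jcomp Ic t i = \<Inter> (Ic ` ({..<t} - {i}))"

definition irredundant_primary_decomposition ::
  "'r::comm_ring_1 set \<Rightarrow> (nat \<Rightarrow> 'r set) \<Rightarrow> nat \<Rightarrow> bool" where
  "irredundant_primary_decomposition I Ic t \<longleftrightarrow>
     I = \<Inter> (Ic ` {..<t}) \<and> (\<forall>i<t. primary_ideal (Ic i)) \<and>
     (\<forall>i<t. \<forall>j<t. i \<noteq> j \<longrightarrow> radical (Ic i) \<noteq> radical (Ic j)) \<and>
     (\<forall>i<t. \<not> Jcomp Ic t i \<subseteq> Ic i)"

text \<open>Zero-dimensional: the quotient ring is a finite-dimensional 'a-vector space,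
  i.e. spanned (modulo I) by finitely many classes.\<close>
definition zero_dimensional :: "('n, 'a::field) mpoly set \<Rightarrow> bool" where
  "zero_dimensional I \<longleftrightarrow> is_ideal I \<and>
     (\<exists>B. finite B \<and> (\<forall>f. \<exists>c. f - (\<Sum>b\<in>B. pconst (c b) * b) \<in> I))"

end

theory Submission
  imports Defs "HOL-Computational_Algebra.Polynomial" "HOL-Library.FuncSet"
begin


lemma pconst_0 [simp]: "pconst 0 = 0" by (simp add: pconst_def)
lemma pconst_1 [simp]: "pconst 1 = 1" by (simp add: pconst_def)
lemma pconst_add: "pconst (a + b) = pconst a + pconst b" by (simp add: pconst_def single_add)
lemma pconst_diff: "pconst ((a::'a::ab_group_add) - b) = pconst a - pconst b" by (simp add: pconst_def single_diff)
lemma pconst_mult: "pconst ((a::'a::comm_semiring_1) * b) = (pconst a * pconst b :: ('n,'a) mpoly)"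
  by (simp add: pconst_def mult_single)
lemma pconst_power: "pconst ((a::'a::comm_semiring_1) ^ n) = (pconst a ^ n :: ('n,'a) mpoly)"
  by (induction n) (simp_all add: pconst_mult)

lemma ideal_0: "is_ideal I \<Longrightarrow> 0 \<in> I" by (simp add: is_ideal_def)
lemma ideal_add: "is_ideal I \<Longrightarrow> a \<in> I \<Longrightarrow> b \<in> I \<Longrightarrow> a + b \<in> I" by (simp add: is_ideal_def)
lemma ideal_multL: "is_ideal I \<Longrightarrow> a \<in> I \<Longrightarrow> r * a \<in> I" by (simp add: is_ideal_def)
lemma ideal_multR: "is_ideal I \<Longrightarrow> a \<in> I \<Longrightarrow> a * r \<in> I" by (metis ideal_multL mult.commute)
lemma ideal_uminus: "is_ideal I \<Longrightarrow> a \<in> I \<Longrightarrow> - a \<in> I"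
  by (metis ideal_multL mult_minus1)
lemma ideal_diff: "is_ideal I \<Longrightarrow> a \<in> I \<Longrightarrow> b \<in> I \<Longrightarrow> a - b \<in> I"
  by (metis ideal_add ideal_uminus diff_conv_add_uminus)
lemma ideal_sum: "is_ideal I \<Longrightarrow> (\<And>x. x \<in> S \<Longrightarrow> g x \<in> I) \<Longrightarrow> sum g S \<in> I"
  by (induction S rule: infinite_finite_induct) (auto intro: ideal_0 ideal_add)
lemma ideal_one: "is_ideal I \<Longrightarrow> 1 \<in> I \<Longrightarrow> x \<in> I"
  by (metis ideal_multL mult.right_neutral)

lemma cong_mult: "is_ideal I \<Longrightarrow> a - b \<in> I \<Longrightarrow> c - d \<in> I \<Longrightarrow> a * c - b * d \<in> I"
proof -
  assume *: "is_ideal I" "a - b \<in> I" "c - d \<in> I"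
  have "a * c - b * d = a * (c - d) + (a - b) * d" by (simp add: algebra_simps)
  thus ?thesis using * by (metis ideal_add ideal_multL ideal_multR)
qed

lemma cong_power: "is_ideal I \<Longrightarrow> a - b \<in> I \<Longrightarrow> a ^ n - b ^ n \<in> I"
  by (induction n) (auto intro: cong_mult ideal_0)

lemma cong_prod1: "is_ideal I \<Longrightarrow> (\<And>x. x \<in> S \<Longrightarrow> g x - 1 \<in> I) \<Longrightarrow> prod g S - 1 \<in> I"
proof (induction S rule: infinite_finite_induct)
  case (insert x F)
  have "g x * prod g F - 1 * 1 \<in> I" using insert by (intro cong_mult) auto
  thus ?case using insert by simp
qed (auto intro: ideal_0)

lemma prod_in_ideal: "is_ideal I \<Longrightarrow> finite S \<Longrightarrow> x \<in> S \<Longrightarrow> g x \<in> I \<Longrightarrow> prod g S \<in> I"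
  by (metis ideal_multR prod.remove)

lemma card_field_ge2: "card (UNIV :: 'a::{finite,field} set) \<ge> 2"
proof -
  have "{0, 1::'a} \<subseteq> UNIV" by simp
  hence "card {0, 1::'a} \<le> card (UNIV::'a set)" by (intro card_mono) auto
  thus ?thesis by simp
qed

lemma fermat_field: "(x::'a::{finite,field}) ^ card (UNIV :: 'a set) = x"
proof (cases "x = 0")
  case True thus ?thesis using card_field_ge2[where 'a='a] by simp
next
  case False
  let ?S = "UNIV - {0::'a}"
  have bij: "bij_betw (\<lambda>y. x * y) ?S ?S"
  proof (rule bij_betwI')
    show "\<And>a b. a \<in> ?S \<Longrightarrow> b \<in> ?S \<Longrightarrow> (x * a = x * b) = (a = b)" using False by simp
    show "\<And>a. a \<in> ?S \<Longrightarrow> x * a \<in> ?S" using False by simp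
    show "\<And>y. y \<in> ?S \<Longrightarrow> \<exists>a\<in>?S. y = x * a"
    proof -
      fix y assume "y \<in> ?S"
      hence "y / x \<in> ?S \<and> y = x * (y / x)" using False by simp
      thus "\<exists>a\<in>?S. y = x * a" by blast
    qed
  qed
  have "(\<Prod>y\<in>?S. x * y) = (\<Prod>y\<in>?S. y)"
    using prod.reindex_bij_betw[OF bij, of "\<lambda>y. y"] by simp
  moreover have "(\<Prod>y\<in>?S. x * y) = x ^ card ?S * (\<Prod>y\<in>?S. y)"
    by (simp add: prod.distrib)
  moreover have "(\<Prod>y\<in>?S. y) \<noteq> 0" by simp
  ultimately have 1: "x ^ card ?S = 1" by simp
  have "card ?S = card (UNIV::'a set) - 1" by (simp add: card_Diff_singleton)
  hence 2: "card (UNIV::'a set) = Suc (card ?S)" using card_field_ge2[where 'a='a] by linarith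
  show ?thesis unfolding 2 using 1 by simp
qed



lemma pconst_sum: "pconst (sum g S) = (\<Sum>x\<in>S. pconst (g x) :: ('n,'a::comm_monoid_add) mpoly)"
  by (induction S rule: infinite_finite_induct) (simp_all add: pconst_add)

lemma map_poly_pconst_mult:
  "map_poly pconst (p * q) = (map_poly pconst p * map_poly pconst q :: ('n,'a::field) mpoly poly)"
  by (rule poly_eqI) (simp add: coeff_map_poly coeff_mult pconst_sum pconst_mult)

lemma map_poly_pconst_diff:
  "map_poly pconst (p - q) = (map_poly pconst p - map_poly pconst q :: ('n,'a::field) mpoly poly)"
  by (rule poly_eqI) (simp add: coeff_map_poly pconst_diff)

lemma map_poly_pconst_prod:
  "finite S \<Longrightarrow> map_poly pconst (prod g S) = (\<Prod>x\<in>S. map_poly pconst (g x) :: ('n,'a::field) mpoly poly)"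
  by (induction S rule: finite_induct) (simp_all add: map_poly_pconst_mult)

lemma prod_X_minus:
  "(\<Prod>c\<in>(UNIV::'a::{finite,field} set). [:-c, 1:]) = monom 1 (card (UNIV::'a set)) - [:0,1:]"
  (is "?P = ?Q")
proof (rule poly_eqI_degree_lead_coeff[where n = "card (UNIV::'a set)" and A = UNIV])
  let ?q = "card (UNIV::'a set)"
  have q2: "?q \<ge> 2" by (rule card_field_ge2)
  have dP: "degree ?P = ?q"
    by (subst degree_prod_eq_sum_degree) auto
  have "lead_coeff ?P = 1" by (simp add: lead_coeff_prod)
  thus "coeff ?P ?q = coeff ?Q ?q" using dP q2 by (simp add: coeff_pCons split: nat.splits)
  show "?q \<le> card (UNIV :: 'a set)" by simp
  show "degree ?P \<le> ?q" using dP by simp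
  show "degree ?Q \<le> ?q" using q2
    by (intro degree_diff_le) (auto intro: order.trans[OF degree_monom_le])
  fix z :: 'a
  have "poly ?P z = (\<Prod>c\<in>UNIV. z - c)" by (simp add: poly_prod)
  also have "\<dots> = 0" using prod_zero[of UNIV "\<lambda>c. z - c"] by auto
  finally show "poly ?P z = poly ?Q z" by (simp add: poly_monom fermat_field)
qed

lemma prod_f_minus:
  fixes f :: "('n,'a::{finite,field}) mpoly"
  shows "f ^ card (UNIV::'a set) - f = (\<Prod>c\<in>UNIV. f - pconst c)"
proof -
  have "poly (map_poly pconst (\<Prod>c\<in>(UNIV::'a set). [:-c, 1:])) f = (\<Prod>c\<in>UNIV. f - pconst c)"
    by (simp add: map_poly_pconst_prod poly_prod map_poly_pCons pconst_diff[of 0, simplified])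
  moreover have "poly (map_poly pconst (monom 1 (card (UNIV::'a set)) - [:0::'a,1:])) f
     = f ^ card (UNIV::'a set) - f"
    by (simp add: map_poly_pconst_diff map_poly_monom poly_monom map_poly_pCons)
  ultimately show ?thesis by (simp add: prod_X_minus)
qed



lemma primary_ideal_is: "primary_ideal Q \<Longrightarrow> is_ideal Q" by (simp add: primary_ideal_def)
lemma primary_one: "primary_ideal Q \<Longrightarrow> 1 \<notin> Q"
  unfolding primary_ideal_def using ideal_one by blast
lemma primary_mult: "primary_ideal Q \<Longrightarrow> a * b \<in> Q \<Longrightarrow> a \<in> Q \<or> (\<exists>m. b ^ m \<in> Q)"
  by (simp add: primary_ideal_def)

lemma rad_prime:
  assumes "primary_ideal Q" "(a * b) ^ m \<in> Q"
  shows "(\<exists>k. a ^ k \<in> Q) \<or> (\<exists>k. b ^ k \<in> Q)"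
proof -
  have "a ^ m * b ^ m \<in> Q" using assms(2) by (simp add: power_mult_distrib)
  from primary_mult[OF assms(1) this] show ?thesis by (metis power_mult)
qed

lemma prod_rad:
  assumes "primary_ideal Q" "finite S"
  shows "(prod g S) ^ m \<in> Q \<Longrightarrow> \<exists>x\<in>S. \<exists>k. g x ^ k \<in> Q"
  using assms(2)
proof (induction S arbitrary: m rule: finite_induct)
  case empty thus ?case using primary_one[OF assms(1)] by simp
next
  case (insert x F)
  hence "(g x * prod g F) ^ m \<in> Q" by simp
  from rad_prime[OF assms(1) this] show ?case
    using insert.IH by (meson insertCI)
qed

lemma expand_pow: "\<exists>t. (a + y * s) ^ k = a ^ k + y * (t::'r::comm_ring_1)"
proof (induction k)
  case 0 show ?case by (rule exI[of _ 0]) simp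
next
  case (Suc k)
  then obtain t where t: "(a + y * s) ^ k = a ^ k + y * t" by blast
  show ?case
  proof (rule exI[of _ "a * t + s * a ^ k + y * s * t"])
    have "(a + y * s) ^ Suc k = (a + y * s) * (a ^ k + y * t)" by (simp add: t)
    also have "\<dots> = a * a ^ k + y * (a * t + s * a ^ k + y * s * t)" by (simp add: algebra_simps)
    finally show "(a + y * s) ^ Suc k = a ^ Suc k + y * (a * t + s * a ^ k + y * s * t)" by simp
  qed
qed

lemma expand_prod:
  "finite S \<Longrightarrow> \<exists>t. (\<Prod>d\<in>S. y + u d) = (\<Prod>d\<in>S. u d) + y * (t::'r::comm_ring_1)"
proof (induction S rule: finite_induct)
  case empty show ?case by (rule exI[of _ 0]) simp
next
  case (insert x F)
  then obtain t where t: "(\<Prod>d\<in>F. y + u d) = (\<Prod>d\<in>F. u d) + y * t" by blast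
  show ?case using insert
  proof (intro exI[of _ "prod u F + t * (y + u x)"])
    have "(\<Prod>d\<in>insert x F. y + u d) = (y + u x) * (prod u F + y * t)" using insert t by simp
    also have "\<dots> = u x * prod u F + y * (prod u F + t * (y + u x))" by (simp add: algebra_simps)
    finally show "(\<Prod>d\<in>insert x F. y + u d) = (\<Prod>d\<in>insert x F. u d) + y * (prod u F + t * (y + u x))"
      using insert by simp
  qed
qed

lemma nil_unit:
  assumes Q: "is_ideal Q" and y: "y ^ n \<in> Q" and m: "(a + y * s) ^ m \<in> Q"
  shows "(a ^ m) ^ n \<in> Q"
proof -
  obtain t where t: "(a + y * s) ^ m = a ^ m + y * t" using expand_pow by blast
  have "a ^ m - (- (y * t)) = (a + y * s) ^ m" unfolding t by simp
  hence "a ^ m - (- (y * t)) \<in> Q" using m by simp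
  from cong_power[OF Q this] have "(a ^ m) ^ n - (- (y * t)) ^ n \<in> Q" .
  moreover have "(- (y * t)) ^ n = y ^ n * ((- 1) ^ n * t ^ n)"
    by (subst power_minus) (simp only: power_mult_distrib mult_ac)
  ultimately have 1: "(a ^ m) ^ n - y ^ n * ((- 1) ^ n * t ^ n) \<in> Q" by simp
  have 2: "y ^ n * ((- 1) ^ n * t ^ n) \<in> Q" using Q y by (rule ideal_multR)
  from ideal_add[OF Q 1 2] show ?thesis by simp
qed



lemma pconst_prod: "pconst (prod g S) = (\<Prod>x\<in>S. pconst (g x) :: ('n,'a::comm_semiring_1) mpoly)"
  by (induction S rule: infinite_finite_induct) (simp_all add: pconst_mult)

lemma key_local:
  fixes f :: "('n,'a::{finite,field}) mpoly"
  assumes P: "primary_ideal Q" and f: "f ^ card (UNIV::'a set) - f \<in> Q"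
  shows "\<exists>c. f - pconst c \<in> Q"
proof -
  have Q: "is_ideal Q" using P by (rule primary_ideal_is)
  have "(\<Prod>c\<in>UNIV. f - pconst c) ^ 1 \<in> Q" using f by (simp add: prod_f_minus)
  from prod_rad[OF P finite_UNIV this] obtain c n where cn: "(f - pconst c) ^ n \<in> Q" by blast
  define y where "y = f - pconst c"
  define R where "R = (\<Prod>d\<in>UNIV - {c}. y + pconst (c - d))"
  have "f ^ card (UNIV::'a set) - f = (f - pconst c) * (\<Prod>d\<in>UNIV - {c}. f - pconst d)"
    by (simp add: prod_f_minus prod.remove)
  also have "(\<Prod>d\<in>UNIV - {c}. f - pconst d) = R"
    unfolding R_def y_def by (intro prod.cong) (simp_all add: pconst_diff)
  finally have "y * R \<in> Q" using f y_def by simp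
  from primary_mult[OF P this] show ?thesis
  proof
    assume "y \<in> Q" thus ?thesis unfolding y_def by blast
  next
    assume "\<exists>m. R ^ m \<in> Q"
    then obtain m where m: "R ^ m \<in> Q" by blast
    obtain s where s: "R = (\<Prod>d\<in>UNIV - {c}. pconst (c - d)) + y * s"
      unfolding R_def using expand_prod[of "UNIV - {c}" y "\<lambda>d. pconst (c - d)"] by auto
    define K where "K = (\<Prod>d\<in>UNIV - {c}. c - d)"
    have K: "K \<noteq> 0" unfolding K_def by simp
    have "R = pconst K + y * s" using s by (simp add: K_def pconst_prod)
    hence "((pconst K) ^ m) ^ n \<in> Q" using nil_unit[OF Q _ ] cn m y_def by simp
    hence "pconst ((K ^ m) ^ n) \<in> Q" by (simp add: pconst_power)
    hence "pconst (inverse ((K ^ m) ^ n)) * pconst ((K ^ m) ^ n) \<in> Q" by (rule ideal_multL[OF Q])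
    hence "(1 :: ('n,'a) mpoly) \<in> Q" using K by (simp add: pconst_mult[symmetric])
    with primary_one[OF P] show ?thesis by blast
  qed
qed



definition fq :: "'r::comm_ring_1 set \<Rightarrow> bool" where
  "fq Q \<longleftrightarrow> (\<exists>S. finite S \<and> (\<forall>f. \<exists>s\<in>S. f - s \<in> Q))"

lemma zd_fq:
  fixes I :: "('n, 'a::{finite,field}) mpoly set"
  assumes "zero_dimensional I" "I \<subseteq> Q"
  shows "fq Q"
proof -
  obtain B where B: "finite B" "\<And>f. \<exists>c. f - (\<Sum>b\<in>B. pconst (c b) * b) \<in> I"
    using assms(1) unfolding zero_dimensional_def by blast
  define S where "S = (\<lambda>c. \<Sum>b\<in>B. pconst (c b) * b) ` (PiE B (\<lambda>_. UNIV))"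
  have "finite S" unfolding S_def using B(1) by (intro finite_imageI finite_PiE) auto
  moreover have "\<exists>s\<in>S. f - s \<in> Q" for f
  proof -
    obtain c where c: "f - (\<Sum>b\<in>B. pconst (c b) * b) \<in> I" using B(2) by blast
    have "(\<Sum>b\<in>B. pconst (c b) * b) = (\<Sum>b\<in>B. pconst (restrict c B b) * b)"
      by (intro sum.cong) auto
    moreover have "restrict c B \<in> PiE B (\<lambda>_. UNIV)" by auto
    ultimately have "(\<Sum>b\<in>B. pconst (c b) * b) \<in> S" unfolding S_def by blast
    thus ?thesis using c assms(2) by blast
  qed
  ultimately show ?thesis unfolding fq_def by blast
qed

lemma unit_pow:
  assumes P: "primary_ideal Q" and F: "fq Q" and a: "\<not> (\<exists>m. a ^ m \<in> Q)"
  shows "\<exists>k>0. a ^ k - 1 \<in> Q"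
proof -
  have Q: "is_ideal Q" using P by (rule primary_ideal_is)
  obtain S where S: "finite S" "\<And>f. \<exists>s\<in>S. f - s \<in> Q" using F unfolding fq_def by blast
  define g where "g n = (SOME s. s \<in> S \<and> a ^ n - s \<in> Q)" for n :: nat
  have g: "g n \<in> S \<and> a ^ n - g n \<in> Q" for n
    unfolding g_def by (rule someI_ex) (use S(2) in blast)
  have "range g \<subseteq> S" using g by blast
  hence "finite (range g)" using S(1) finite_subset by blast
  hence "\<not> inj g" using range_inj_infinite by blast
  then obtain i j where ij: "g i = g j" "i \<noteq> j" unfolding inj_def by blast
  have gen: "\<exists>k>0. a ^ k - 1 \<in> Q" if "g i = g j" "i < j" for i j
  proof -
    have "(a ^ j - g j) - (a ^ i - g i) \<in> Q" using ideal_diff[OF Q conjunct2[OF g[of j]] conjunct2[OF g[of i]]] .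
    hence "a ^ j - a ^ i \<in> Q" using that by simp
    moreover have "a ^ j = a ^ i * a ^ (j - i)" using that by (simp add: power_add[symmetric])
    ultimately have "(a ^ (j - i) - 1) * a ^ i \<in> Q" by (simp add: algebra_simps)
    from primary_mult[OF P this] a have "a ^ (j - i) - 1 \<in> Q" by (metis power_mult)
    thus ?thesis using that by (intro exI[of _ "j - i"]) auto
  qed
  show ?thesis
  proof (cases "i < j")
    case True thus ?thesis using gen ij by blast
  next
    case False hence "j < i" using ij by simp
    thus ?thesis using gen ij by metis
  qed
qed

lemma comax1:
  assumes P1: "primary_ideal Q1" and P2: "primary_ideal Q2" and F: "fq Q2"
    and a1: "a ^ m \<in> Q1" and a2: "\<not> (\<exists>m. a ^ m \<in> Q2)"
  shows "\<exists>u\<in>Q1. 1 - u \<in> Q2"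
proof -
  have Q1: "is_ideal Q1" using P1 by (rule primary_ideal_is)
  have Q2: "is_ideal Q2" using P2 by (rule primary_ideal_is)
  obtain k where k: "k > 0" "a ^ k - 1 \<in> Q2" using unit_pow[OF P2 F a2] by blast
  have "(a ^ k) ^ m - 1 ^ m \<in> Q2" using cong_power[OF Q2 k(2)] .
  hence "- ((a ^ m) ^ k - 1) \<in> Q2" using ideal_uminus[OF Q2]
    by (metis power_mult mult.commute power_one)
  hence "1 - (a ^ m) ^ k \<in> Q2" by simp
  moreover have "(a ^ m) ^ k \<in> Q1"
    using k(1) a1 by (metis ideal_multR[OF Q1] power_Suc gr0_conv_Suc)
  ultimately show ?thesis by blast
qed

lemma comax:
  assumes P1: "primary_ideal Q1" and P2: "primary_ideal Q2" and F1: "fq Q1" and F2: "fq Q2"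
    and ne: "radical Q1 \<noteq> radical Q2"
  shows "\<exists>u\<in>Q1. 1 - u \<in> Q2"
proof -
  from ne obtain a where "(a \<in> radical Q1 \<and> a \<notin> radical Q2) \<or> (a \<in> radical Q2 \<and> a \<notin> radical Q1)"
    by blast
  thus ?thesis
  proof
    assume "a \<in> radical Q1 \<and> a \<notin> radical Q2"
    thus ?thesis using comax1[OF P1 P2 F2] unfolding radical_def by blast
  next
    assume "a \<in> radical Q2 \<and> a \<notin> radical Q1"
    then obtain u where u: "u \<in> Q2" "1 - u \<in> Q1"
      using comax1[OF P2 P1 F1] unfolding radical_def by blast
    thus ?thesis by (intro bexI[of _ "1 - u"]) auto
  qed
qed



theorem theorem3:
  fixes I :: "('n::finite, 'a::{finite,field}) mpoly set"
    and Ic :: "nat \<Rightarrow> ('n, 'a) mpoly set" and t :: nat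
  assumes "zero_dimensional I"
    and "irredundant_primary_decomposition I Ic t"
  shows "\<exists>h :: nat \<Rightarrow> ('n, 'a) mpoly.
     (\<forall>i<t. h i \<in> Jcomp Ic t i - Ic i \<and> h i * h i - h i \<in> I) \<and>
     (\<forall>f. (f ^ card (UNIV :: 'a set) - f \<in> I) \<longleftrightarrow>
          (\<exists>c :: nat \<Rightarrow> 'a. f - (\<Sum>i<t. pconst (c i) * h i) \<in> I)) \<and>
     (\<forall>c d :: nat \<Rightarrow> 'a.
          (\<Sum>i<t. pconst (c i) * h i) - (\<Sum>i<t. pconst (d i) * h i) \<in> I
          \<longrightarrow> (\<forall>i<t. c i = d i))"
proof -
  have dec: "I = \<Inter> (Ic ` {..<t})" and prim: "\<And>i. i < t \<Longrightarrow> primary_ideal (Ic i)"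
    and rad: "\<And>i j. i < t \<Longrightarrow> j < t \<Longrightarrow> i \<noteq> j \<Longrightarrow> radical (Ic i) \<noteq> radical (Ic j)"
    using assms(2) unfolding irredundant_primary_decomposition_def by auto
  have id: "\<And>i. i < t \<Longrightarrow> is_ideal (Ic i)" using prim primary_ideal_is by blast
  have memI: "x \<in> I \<longleftrightarrow> (\<forall>j<t. x \<in> Ic j)" for x using dec by auto
  have fqj: "\<And>j. j < t \<Longrightarrow> fq (Ic j)"
    using zd_fq[OF assms(1)] memI by blast
  define v where "v i j = (SOME u. u \<in> Ic j \<and> 1 - u \<in> Ic i)" for i j
  have v: "v i j \<in> Ic j \<and> 1 - v i j \<in> Ic i" if "i < t" "j < t" "i \<noteq> j" for i j
  proof -
    have "\<exists>u\<in>Ic j. 1 - u \<in> Ic i"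
      using comax[OF prim[OF that(2)] prim[OF that(1)] fqj[OF that(2)] fqj[OF that(1)]] rad that
      by metis
    thus ?thesis unfolding v_def by (metis (mono_tags, lifting) someI_ex)
  qed
  define h where "h i = (\<Prod>j\<in>{..<t} - {i}. v i j)" for i
  have hJ: "h i \<in> Ic j" if "i < t" "j < t" "j \<noteq> i" for i j
    unfolding h_def using that v[of i j] id[of j] by (intro prod_in_ideal) auto
  have h1: "h i - 1 \<in> Ic i" if "i < t" for i
    unfolding h_def
  proof (rule cong_prod1[OF id[OF that]])
    fix j assume "j \<in> {..<t} - {i}"
    hence "1 - v i j \<in> Ic i" using v[of i j] that by auto
    from ideal_uminus[OF id[OF that] this] show "v i j - 1 \<in> Ic i" by simp
  qed
  have hnot: "h i \<notin> Ic i" if "i < t" for i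
  proof
    assume "h i \<in> Ic i"
    from ideal_diff[OF id[OF that] this h1[OF that]] have "1 \<in> Ic i" by simp
    with primary_one[OF prim[OF that]] show False by simp
  qed
  have idem: "h i * h i - h i \<in> I" if "i < t" for i
    unfolding memI
  proof (intro allI impI)
    fix j assume j: "j < t"
    show "h i * h i - h i \<in> Ic j"
    proof (cases "j = i")
      case True
      have "h i * (h i - 1) \<in> Ic j" using True h1[OF that] id[OF j] by (simp add: ideal_multL)
      thus ?thesis by (simp add: algebra_simps)
    next
      case False
      thus ?thesis using hJ[OF that j False] id[OF j] by (intro ideal_diff ideal_multR)
    qed
  qed
  define s where "s c = (\<Sum>i<t. pconst (c i) * h i)" for c :: "nat \<Rightarrow> 'a"
  have scong: "s c - pconst (c j) \<in> Ic j" if j: "j < t" for c j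
  proof -
    have "s c = pconst (c j) * h j + (\<Sum>i\<in>{..<t} - {j}. pconst (c i) * h i)"
      unfolding s_def using j by (simp add: sum.remove)
    hence "s c - pconst (c j) = pconst (c j) * (h j - 1) + (\<Sum>i\<in>{..<t} - {j}. pconst (c i) * h i)"
      by (simp add: algebra_simps)
    moreover have "pconst (c j) * (h j - 1) \<in> Ic j" using h1[OF j] id[OF j] by (simp add: ideal_multL)
    moreover have "(\<Sum>i\<in>{..<t} - {j}. pconst (c i) * h i) \<in> Ic j"
      using hJ j id[OF j] by (intro ideal_sum) (auto intro: ideal_multL)
    ultimately show ?thesis using ideal_add[OF id[OF j]] by simp
  qed
  let ?q = "card (UNIV :: 'a set)"
  have part2: "(f ^ ?q - f \<in> I) \<longleftrightarrow> (\<exists>c. f - s c \<in> I)" for f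
  proof
    assume H: "f ^ ?q - f \<in> I"
    define c where "c j = (SOME c. f - pconst c \<in> Ic j)" for j
    have c: "f - pconst (c j) \<in> Ic j" if "j < t" for j
    proof -
      have "\<exists>c. f - pconst c \<in> Ic j" using key_local[OF prim[OF that]] H memI that by blast
      thus ?thesis unfolding c_def by (rule someI_ex)
    qed
    have "f - s c \<in> I" unfolding memI
    proof (intro allI impI)
      fix j assume j: "j < t"
      from ideal_diff[OF id[OF j] c[OF j] scong[OF j, of c]] show "f - s c \<in> Ic j" by simp
    qed
    thus "\<exists>c. f - s c \<in> I" by blast
  next
    assume "\<exists>c. f - s c \<in> I"
    then obtain c where c: "f - s c \<in> I" by blast
    show "f ^ ?q - f \<in> I" unfolding memI
    proof (intro allI impI)
      fix j assume j: "j < t"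
      have "f - s c \<in> Ic j" using c memI j by blast
      from ideal_add[OF id[OF j] this scong[OF j, of c]] have 1: "f - pconst (c j) \<in> Ic j" by simp
      from cong_power[OF id[OF j] this, of ?q]
      have "f ^ ?q - pconst (c j) \<in> Ic j" by (simp add: pconst_power[symmetric] fermat_field)
      from ideal_diff[OF id[OF j] this 1] show "f ^ ?q - f \<in> Ic j" by simp
    qed
  qed
  have part3: "c i = d i" if H: "s c - s d \<in> I" and i: "i < t" for c d i
  proof (rule ccontr)
    assume ne: "c i \<noteq> d i"
    have "s c - s d \<in> Ic i" using H memI i by blast
    from ideal_add[OF id[OF i] ideal_diff[OF id[OF i] this scong[OF i, of c]] scong[OF i, of d]]
    have "pconst (c i - d i) \<in> Ic i" by (simp add: pconst_diff)
    from ideal_multL[OF id[OF i] this, of "pconst (inverse (c i - d i))"]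
    have "1 \<in> Ic i" using ne by (simp add: pconst_mult[symmetric])
    with primary_one[OF prim[OF i]] show False by simp
  qed
  show ?thesis
  proof (intro exI[of _ h] conjI allI impI)
    fix i assume i: "i < t"
    show "h i \<in> Jcomp Ic t i - Ic i" unfolding Jcomp_def using hJ[OF i] hnot[OF i] by auto
    show "h i * h i - h i \<in> I" using idem[OF i] .
  next
    fix f show "(f ^ ?q - f \<in> I) \<longleftrightarrow> (\<exists>c. f - (\<Sum>i<t. pconst (c i) * h i) \<in> I)"
      using part2[of f] unfolding s_def .
  next
    fix c d :: "nat \<Rightarrow> 'a" and i
    assume "(\<Sum>i<t. pconst (c i) * h i) - (\<Sum>i<t. pconst (d i) * h i) \<in> I" "i < t"
    thus "c i = d i" using part3 unfolding s_def by blast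
  qed
qed


end
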